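(* Let $f:\mathbb{R}_{++}\to\mathbb{R}$ be operator convex, i.e. for all $n\in\mathbb{N}$, all positive definite Hermitian $X,Y\in\mathbb{H}^n_{++}$ and all $\lambda\in[0,1]$, $f(\lambda X+(1-\lambda)Y)\preceq\lambda f(X)+(1-\lambda)f(Y)$. Then for any positive semidefinite $A\in\mathbb{H}^n$, the function $g(X)=\operatorname{tr}[Af(X)]$ is $\lambda_{\max}(A)$-smooth and $\lambda_{\min}(A)$-strongly convex relative to $X\mapsto\operatorname{tr}[f(X)]$ on $\mathbb{H}^n_{++}$.
   Context: For Hermitian $X=\sum_i\lambda_iv_iv_i^\dagger$, $f(X)=\sum_if(\lambda_i)v_iv_i^\dagger$. $\preceq$ is the semidefinite (Loewner) order; $\lambda_{\max},\lambda_{\min}$ are largest/smallest eigenvalues. A function $g$ is $L$-smooth relative to $\varphi$ on a set $\mathcal{C}$ if $L\varphi-g$ is convex on the relative interior of $\mathcal{C}$, and $\mu$-strongly convex relative to $\varphi$ if $g-\mu\varphi$ is convex there. *)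

theory Defs
  imports "Jordan_Normal_Form.Char_Poly"
begin

definition cadj :: "complex mat \<Rightarrow> complex mat" where
  "cadj A = mat (dim_col A) (dim_row A) (\<lambda>(i,j). cnj (A $$ (j,i)))"

definition mtrace :: "complex mat \<Rightarrow> complex" where
  "mtrace A = (\<Sum>i<dim_row A. A $$ (i,i))"

definition hermitian :: "nat \<Rightarrow> complex mat \<Rightarrow> bool" where
  "hermitian n A \<longleftrightarrow> A \<in> carrier_mat n n \<and> cadj A = A"

definition qform :: "complex mat \<Rightarrow> complex vec \<Rightarrow> complex" where
  "qform A v = (\<Sum>i<dim_vec v. \<Sum>j<dim_vec v. cnj (v $ i) * A $$ (i,j) * v $ j)"

definition psd :: "nat \<Rightarrow> complex mat \<Rightarrow> bool" where
  "psd n A \<longleftrightarrow> hermitian n A \<and> (\<forall>v\<in>carrier_vec n. 0 \<le> Re (qform A v))"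

definition pd :: "nat \<Rightarrow> complex mat \<Rightarrow> bool" where
  "pd n A \<longleftrightarrow> hermitian n A \<and> (\<forall>v\<in>carrier_vec n. v \<noteq> 0\<^sub>v n \<longrightarrow> 0 < Re (qform A v))"

definition loewner_le :: "nat \<Rightarrow> complex mat \<Rightarrow> complex mat \<Rightarrow> bool" where
  "loewner_le n A B \<longleftrightarrow> A \<in> carrier_mat n n \<and> B \<in> carrier_mat n n \<and> psd n (B - A)"

definition unitary :: "nat \<Rightarrow> complex mat \<Rightarrow> bool" where
  "unitary n U \<longleftrightarrow> U \<in> carrier_mat n n \<and> U * cadj U = 1\<^sub>m n"

definition rdiag :: "nat \<Rightarrow> (nat \<Rightarrow> real) \<Rightarrow> complex mat" where
  "rdiag n l = mat_diag n (\<lambda>i. complex_of_real (l i))"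

definition spectral_decomp :: "complex mat \<Rightarrow> complex mat \<Rightarrow> (nat \<Rightarrow> real) \<Rightarrow> bool" where
  "spectral_decomp X U l \<longleftrightarrow> unitary (dim_row X) U \<and> X = U * rdiag (dim_row X) l * cadj U"

definition mat_fun :: "(real \<Rightarrow> real) \<Rightarrow> complex mat \<Rightarrow> complex mat" where
  "mat_fun f X = (let (U, l) = (SOME (U, l). spectral_decomp X U l)
                  in U * rdiag (dim_row X) (f \<circ> l) * cadj U)"

definition lambda_max :: "complex mat \<Rightarrow> real" where
  "lambda_max A = Max {r. eigenvalue A (complex_of_real r)}"

definition lambda_min :: "complex mat \<Rightarrow> real" where
  "lambda_min A = Min {r. eigenvalue A (complex_of_real r)}"

definition operator_convex :: "(real \<Rightarrow> real) \<Rightarrow> bool" where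
  "operator_convex f \<longleftrightarrow> (\<forall>n X Y t. pd n X \<longrightarrow> pd n Y \<longrightarrow> 0 \<le> t \<longrightarrow> t \<le> 1 \<longrightarrow>
     loewner_le n (mat_fun f (complex_of_real t \<cdot>\<^sub>m X + complex_of_real (1 - t) \<cdot>\<^sub>m Y))
       (complex_of_real t \<cdot>\<^sub>m mat_fun f X + complex_of_real (1 - t) \<cdot>\<^sub>m mat_fun f Y))"

text \<open>convexity of a real-valued function on the (open, convex) set of n x n
  positive definite Hermitian matrices, which is its own relative interior in H^n\<close>
definition convex_on_pd :: "nat \<Rightarrow> (complex mat \<Rightarrow> real) \<Rightarrow> bool" where
  "convex_on_pd n h \<longleftrightarrow> (\<forall>X Y t. pd n X \<longrightarrow> pd n Y \<longrightarrow> 0 \<le> t \<longrightarrow> t \<le> 1 \<longrightarrow>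
     h (complex_of_real t \<cdot>\<^sub>m X + complex_of_real (1 - t) \<cdot>\<^sub>m Y) \<le> t * h X + (1 - t) * h Y)"

definition rel_smooth :: "nat \<Rightarrow> real \<Rightarrow> (complex mat \<Rightarrow> real) \<Rightarrow> (complex mat \<Rightarrow> real) \<Rightarrow> bool" where
  "rel_smooth n L g \<phi> \<longleftrightarrow> convex_on_pd n (\<lambda>X. L * \<phi> X - g X)"

definition rel_strongly_convex :: "nat \<Rightarrow> real \<Rightarrow> (complex mat \<Rightarrow> real) \<Rightarrow> (complex mat \<Rightarrow> real) \<Rightarrow> bool" where
  "rel_strongly_convex n \<mu> g \<phi> \<longleftrightarrow> convex_on_pd n (\<lambda>X. g X - \<mu> * \<phi> X)"

end

theory Submission imports Defs "Jordan_Normal_Form.Schur_Decomposition" "Jordan_Normal_Form.Spectral_Radius"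
begin
lemma cadj_carrier[simp]: "A \<in> carrier_mat n m \<Longrightarrow> cadj A \<in> carrier_mat m n"
  by (auto simp: cadj_def)
lemma cadj_dims[simp]: "dim_row (cadj A) = dim_col A" "dim_col (cadj A) = dim_row A"
  by (auto simp: cadj_def)
lemma cadj_index[simp]: "i < dim_col A \<Longrightarrow> j < dim_row A \<Longrightarrow> cadj A $$ (i,j) = cnj (A $$ (j,i))"
  by (auto simp: cadj_def)
lemma cadj_cadj[simp]: "cadj (cadj A) = A"
  by (rule eq_matI, auto)
lemma cadj_mult: "A \<in> carrier_mat n m \<Longrightarrow> B \<in> carrier_mat m k \<Longrightarrow> cadj (A * B) = cadj B * cadj A"
  by (rule eq_matI, auto simp: scalar_prod_def mult.commute intro: sum.cong)

lemma mult_nn[simp]: "A \<in> carrier_mat n n \<Longrightarrow> B \<in> carrier_mat n n \<Longrightarrow> A * B \<in> carrier_mat n n"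
  by auto

lemma rdiag_carrier[simp]: "rdiag n l \<in> carrier_mat n n"
  by (simp add: rdiag_def)

lemma udu_entry:
  assumes U: "U \<in> carrier_mat n n" and i: "i < n" and j: "j < n"
  shows "(U * rdiag n l * cadj U) $$ (i,j) = (\<Sum>k<n. U $$ (i,k) * complex_of_real (l k) * cnj (U $$ (j,k)))"
proof -
  have "U * rdiag n l = mat n n (\<lambda>(i,j). U $$ (i,j) * complex_of_real (l j))"
    unfolding rdiag_def by (rule mat_diag_mult_right[OF U])
  then show ?thesis using U i j
    by (simp add: scalar_prod_def lessThan_atLeast0)
qed

lemma uu_entry:
  assumes U: "U \<in> carrier_mat n m" and i: "i < n" and j: "j < n"
  shows "(U * cadj U) $$ (i,j) = (\<Sum>k<m. U $$ (i,k) * cnj (U $$ (j,k)))"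
  using U i j by (simp add: scalar_prod_def lessThan_atLeast0)

lemma uu_entry2:
  assumes U: "U \<in> carrier_mat m n" and i: "i < n" and j: "j < n"
  shows "(cadj U * U) $$ (i,j) = (\<Sum>k<m. cnj (U $$ (k,i)) * U $$ (k,j))"
  using U i j by (simp add: scalar_prod_def lessThan_atLeast0)

lemma unitary_carrier: "unitary n U \<Longrightarrow> U \<in> carrier_mat n n"
  by (simp add: unitary_def)

lemma unitary_left: "unitary n U \<Longrightarrow> cadj U * U = 1\<^sub>m n"
  unfolding unitary_def using mat_mult_left_right_inverse[of U n "cadj U"] by auto

lemma unitary_right: "unitary n U \<Longrightarrow> U * cadj U = 1\<^sub>m n"
  unfolding unitary_def by auto

lemma unitary_rows: "unitary n U \<Longrightarrow> i < n \<Longrightarrow> j < n \<Longrightarrow>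
   (\<Sum>k<n. U $$ (i,k) * cnj (U $$ (j,k))) = (if i = j then 1 else 0)"
  using uu_entry[of U n n i j] unitary_right[of n U] unitary_carrier[of n U] by auto

lemma unitary_cols: "unitary n U \<Longrightarrow> i < n \<Longrightarrow> j < n \<Longrightarrow>
   (\<Sum>k<n. cnj (U $$ (k,i)) * U $$ (k,j)) = (if i = j then 1 else 0)"
  using uu_entry2[of U n n i j] unitary_left[of n U] unitary_carrier[of n U] by auto

lemma cvec_self: "w \<in> carrier_vec n \<Longrightarrow> w \<bullet>c w = complex_of_real (\<Sum>k<n. (cmod (w $ k))^2)"
  by (simp add: scalar_prod_def lessThan_atLeast0, rule sum.cong, auto simp: complex_norm_square[symmetric])

lemma cprod_entries: "x \<in> carrier_vec n \<Longrightarrow> y \<in> carrier_vec n \<Longrightarrow>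
   (\<Sum>k<n. cnj (x $ k) * y $ k) = y \<bullet>c x"
  by (simp add: scalar_prod_def lessThan_atLeast0 mult.commute)

lemma onb_exists:
  assumes v: "v \<in> carrier_vec n" and v0: "v \<noteq> 0\<^sub>v n"
  shows "\<exists>W c. unitary n W \<and> col W 0 = c \<cdot>\<^sub>v v \<and> c \<noteq> 0"
proof -
  interpret cof_vec_space n "TYPE(complex)" .
  define b where "b = basis_completion v"
  from basis_completion[OF v v0, folded b_def]
  have dist_b: "distinct b" 
    and indep: "\<not> lin_dep (set b)" and b: "set b \<subseteq> carrier_vec n" and hdb: "hd b = v" 
    and len_b: "length b = n" by auto
  have n: "n \<noteq> 0" using v v0 by (cases n, auto)
  from hdb len_b n obtain vs where bv: "b = v # vs" by (cases b, auto)
  define ws0 where "ws0 = gram_schmidt n b"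
  from gram_schmidt_result[OF b dist_b indep refl, folded ws0_def]
  have ws0: "set ws0 \<subseteq> carrier_vec n" "corthogonal ws0" "length ws0 = n" 
    by (auto simp: len_b)
  from gram_schmidt_hd[OF v, of vs, folded bv] have hdws: "hd ws0 = v" unfolding ws0_def .
  have w0: "ws0 ! 0 = v" using hdws ws0(3) n by (cases ws0, auto)
  define c where "c = (\<lambda>i. complex_of_real (1 / sqrt (Re (ws0 ! i \<bullet>c ws0 ! i))))"
  define W where "W = mat n n (\<lambda>(k,i). c i * ws0 ! i $ k)"
  have wc: "\<And>i. i < n \<Longrightarrow> ws0 ! i \<in> carrier_vec n" using ws0 by auto
  have W: "W \<in> carrier_mat n n" unfolding W_def by auto
  have nrm: "c i * c i * (ws0 ! i \<bullet>c ws0 ! i) = 1" if i: "i < n" for i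
  proof -
    define r where "r = (\<Sum>k<n. (cmod (ws0 ! i $ k))^2)"
    have e: "ws0 ! i \<bullet>c ws0 ! i = complex_of_real r" unfolding r_def by (rule cvec_self[OF wc[OF i]])
    have "ws0 ! i \<bullet>c ws0 ! i \<noteq> 0" using corthogonalD[OF ws0(2), of i i] ws0(3) i by auto
    hence "r \<noteq> 0" using e by auto
    moreover have "r \<ge> 0" unfolding r_def by (rule sum_nonneg, auto)
    ultimately have r: "r > 0" by auto
    have "c i = complex_of_real (1 / sqrt r)" unfolding c_def e by simp
    hence "c i * c i * (ws0 ! i \<bullet>c ws0 ! i) = complex_of_real ((1 / sqrt r) * (1 / sqrt r) * r)"
      unfolding e of_real_mult by (simp only:)
    also have "(1 / sqrt r) * (1 / sqrt r) * r = 1" using r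
      by (metis divide_self_if less_irrefl real_divide_square_eq real_sqrt_pow2 power2_eq_square less_imp_le times_divide_eq_left mult_1)
    finally show ?thesis by simp
  qed
  have "cadj W * W = 1\<^sub>m n"
  proof (rule eq_matI)
    fix i j assume i: "i < dim_row (1\<^sub>m n :: complex mat)" and j: "j < dim_col (1\<^sub>m n :: complex mat)"
    hence i: "i < n" and j: "j < n" by auto
    have "(cadj W * W) $$ (i,j) = (\<Sum>k<n. cnj (W $$ (k,i)) * W $$ (k,j))"
      by (rule uu_entry2[OF W i j])
    also have "\<dots> = (\<Sum>k<n. (c i * c j) * (cnj (ws0 ! i $ k) * ws0 ! j $ k))"
      using i j unfolding W_def c_def by (intro sum.cong, auto simp: ac_simps)
    also have "\<dots> = c i * c j * (ws0 ! j \<bullet>c ws0 ! i)"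
      by (simp add: sum_distrib_left[symmetric] cprod_entries[OF wc[OF i] wc[OF j]])
    also have "\<dots> = 1\<^sub>m n $$ (i,j)"
    proof (cases "i = j")
      case True thus ?thesis using nrm[OF i] i by simp
    next
      case False
      hence "ws0 ! j \<bullet>c ws0 ! i = 0" using corthogonalD[OF ws0(2), of j i] ws0(3) i j by auto
      thus ?thesis using False i j by simp
    qed
    finally show "(cadj W * W) $$ (i,j) = 1\<^sub>m n $$ (i,j)" .
  qed (insert W, auto)
  hence "W * cadj W = 1\<^sub>m n" using mat_mult_left_right_inverse[of "cadj W" n W] W by auto
  hence uW: "unitary n W" unfolding unitary_def using W by auto
  have c0: "c 0 \<noteq> 0" using nrm[of 0] n by auto
  have "col W 0 = c 0 \<cdot>\<^sub>v v"
    by (rule eq_vecI, insert W n v w0, auto simp: W_def)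
  thus ?thesis using uW c0 by blast
qed

lemma spectral:
  "hermitian n A \<Longrightarrow> \<exists>U l. unitary n U \<and> A = U * rdiag n l * cadj U"
proof (induction n arbitrary: A)
  case 0
  hence A: "A \<in> carrier_mat 0 0" by (simp add: hermitian_def)
  have "unitary 0 (1\<^sub>m 0)" unfolding unitary_def by (auto intro!: eq_matI)
  moreover have "A = 1\<^sub>m 0 * rdiag 0 (\<lambda>_. 0) * cadj (1\<^sub>m 0)" by (rule eq_matI, insert A, auto)
  ultimately show ?case by blast
next
  case (Suc m)
  define n where "n = Suc m"
  have A: "A \<in> carrier_mat n n" and hA: "cadj A = A" using Suc.prems by (auto simp: hermitian_def n_def)
  obtain e where "eigenvalue A e" using spectrum_non_empty[OF A] by (auto simp: spectrum_def n_def)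
  then obtain v where "eigenvector A v e" by (auto simp: eigenvalue_def)
  hence v: "v \<in> carrier_vec n" "v \<noteq> 0\<^sub>v n" "A *\<^sub>v v = e \<cdot>\<^sub>v v" using A by (auto simp: eigenvector_def)
  obtain W c where W: "unitary n W" "col W 0 = c \<cdot>\<^sub>v v" "c \<noteq> 0" using onb_exists[OF v(1,2)] by blast
  have Wc: "W \<in> carrier_mat n n" using W by (simp add: unitary_def)
  have WW: "W * cadj W = 1\<^sub>m n" "cadj W * W = 1\<^sub>m n" using unitary_left unitary_right W by auto
  define A' where "A' = cadj W * A * W"
  have A'c: "A' \<in> carrier_mat n n" using Wc A by (simp add: A'_def)
  have hA': "cadj A' = A'"
  proof -
    have "cadj A' = cadj W * cadj (cadj W * A)" unfolding A'_def
      by (rule cadj_mult[of _ n n], insert Wc A, auto)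
    also have "cadj (cadj W * A) = cadj A * W" 
      by (subst cadj_mult[of _ n n], insert Wc A, auto)
    finally show ?thesis unfolding A'_def hA using Wc A by (simp add: assoc_mult_mat[of _ n n _ n _ n])
  qed
  have n0: "0 < n" by (simp add: n_def)
  have "col A' 0 = cadj W *\<^sub>v (A *\<^sub>v col W 0)"
    unfolding A'_def assoc_mult_mat[OF cadj_carrier[OF Wc] A Wc]
      col_mult2[OF cadj_carrier[OF Wc] mult_nn[OF A Wc] n0] col_mult2[OF A Wc n0] ..
  also have "A *\<^sub>v col W 0 = e \<cdot>\<^sub>v col W 0"
    unfolding W(2) using A v by (simp add: mult_mat_vec[OF A] smult_smult_assoc mult.commute)
  also have "cadj W *\<^sub>v (e \<cdot>\<^sub>v col W 0) = e \<cdot>\<^sub>v (cadj W *\<^sub>v col W 0)"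
    using Wc n0 by (intro mult_mat_vec[of _ n n], auto)
  also have "cadj W *\<^sub>v col W 0 = col (cadj W * W) 0" using Wc n0 by (simp add: col_mult2[of _ n n _ n])
  also have "\<dots> = unit_vec n 0" unfolding WW using n0 by simp
  finally have col0: "col A' 0 = e \<cdot>\<^sub>v unit_vec n 0" .
  have Ai0: "A' $$ (i,0) = (if i = 0 then e else 0)" if i: "i < n" for i
    using arg_cong[OF col0, of "\<lambda>w. w $ i"] i A'c n0 by auto
  have A0j: "A' $$ (0,j) = (if j = 0 then cnj e else 0)" if j: "j < n" for j
  proof -
    have "A' $$ (0,j) = cadj A' $$ (0,j)" using hA' by simp
    also have "\<dots> = cnj (A' $$ (j,0))" using A'c j n0 by simp
    finally show ?thesis using Ai0[OF j] by simp
  qed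
  have "cnj e = e" using A0j[OF n0] Ai0[OF n0] by simp
  hence "Im e = 0" by (metis complex_cnj_cancel_iff complex_eq_iff complex_cnj_complex_of_real Re_complex_of_real cnj.simps(2) neg_equal_zero)
  hence ereal: "e = complex_of_real (Re e)" by (simp add: complex_eq_iff)
  define B where "B = mat m m (\<lambda>(i,j). A' $$ (Suc i, Suc j))"
  have hB: "hermitian m B" unfolding hermitian_def
  proof
    show "B \<in> carrier_mat m m" by (simp add: B_def)
    show "cadj B = B"
    proof (rule eq_matI)
      fix i j assume "i < dim_row B" "j < dim_col B"
      hence i: "i < m" and j: "j < m" by (auto simp: B_def)
      have "A' $$ (Suc i, Suc j) = cadj A' $$ (Suc i, Suc j)" using hA' by simp
      also have "\<dots> = cnj (A' $$ (Suc j, Suc i))" using A'c i j by (simp add: n_def)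
      finally show "cadj B $$ (i,j) = B $$ (i,j)" using i j by (simp add: B_def)
    qed (auto simp: B_def)
  qed
  obtain U1 l1 where U1: "unitary m U1" and B: "B = U1 * rdiag m l1 * cadj U1"
    using Suc.IH[OF hB] by blast
  have U1c: "U1 \<in> carrier_mat m m" using U1 by (simp add: unitary_def)
  define V where "V = mat n n (\<lambda>(i,j). if i = 0 then (if j = 0 then 1 else 0) else if j = 0 then 0 else U1 $$ (i - 1, j - 1))"
  define l where "l = (\<lambda>i. if i = 0 then Re e else l1 (i - 1))"
  have Vc: "V \<in> carrier_mat n n" by (simp add: V_def)
  have V0: "V $$ (0,j) = (if j = 0 then 1 else 0)" if "j < n" for j using that n0 by (simp add: V_def)
  have Vj0: "V $$ (i,0) = (if i = 0 then 1 else 0)" if "i < n" for i using that n0 by (simp add: V_def)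
  have VSS: "V $$ (Suc i, Suc j) = U1 $$ (i,j)" if "i < m" "j < m" for i j using that by (simp add: V_def n_def)
  have sum0: "(\<Sum>k<m. V $$ (0,Suc k) * (g k :: complex)) = 0" for g
    by (rule sum.neutral, auto simp: V0 n_def)
  have sum0b: "(\<Sum>k<m. V $$ (0,Suc k) * (g k :: complex) * h k) = 0" for g h
    by (rule sum.neutral, auto simp: V0 n_def)
  have sum0': "(\<Sum>k<m. (g k :: complex) * cnj (V $$ (0,Suc k))) = 0" for g
    by (rule sum.neutral, auto simp: V0 n_def)
  have VV: "V * cadj V = 1\<^sub>m n"
  proof (rule eq_matI)
    fix i j assume "i < dim_row (1\<^sub>m n :: complex mat)" "j < dim_col (1\<^sub>m n :: complex mat)"
    hence i: "i < n" and j: "j < n" by auto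
    have "(V * cadj V) $$ (i,j) = (\<Sum>k<n. V $$ (i,k) * cnj (V $$ (j,k)))" by (rule uu_entry[OF Vc i j])
    also have "\<dots> = V $$ (i,0) * cnj (V $$ (j,0)) + (\<Sum>k<m. V $$ (i,Suc k) * cnj (V $$ (j,Suc k)))"
      unfolding n_def by (rule sum.lessThan_Suc_shift)
    also have "\<dots> = 1\<^sub>m n $$ (i,j)"
    proof (cases i)
      case 0 thus ?thesis using i j sum0 by (cases j, auto simp: V0 Vj0 sum0')
    next
      case (Suc i')
      show ?thesis
      proof (cases j)
        case 0 thus ?thesis using i j Suc by (auto simp: V0 Vj0 sum0')
      next
        case (Suc j')
        have "(\<Sum>k<m. V $$ (i,Suc k) * cnj (V $$ (j,Suc k))) = (\<Sum>k<m. U1 $$ (i',k) * cnj (U1 $$ (j',k)))"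
          using i j \<open>i = Suc i'\<close> Suc by (intro sum.cong, auto simp: VSS n_def)
        also have "\<dots> = (if i' = j' then 1 else 0)" using unitary_rows[OF U1, of i' j'] i j \<open>i = Suc i'\<close> Suc by (simp add: n_def)
        finally show ?thesis using i j \<open>i = Suc i'\<close> Suc by (simp add: Vj0)
      qed
    qed
    finally show "(V * cadj V) $$ (i,j) = 1\<^sub>m n $$ (i,j)" .
  qed (insert Vc, auto)
  have uV: "unitary n V" using Vc VV by (simp add: unitary_def)
  have A'V: "A' = V * rdiag n l * cadj V"
  proof (rule eq_matI)
    fix i j assume "i < dim_row (V * rdiag n l * cadj V)" "j < dim_col (V * rdiag n l * cadj V)"
    hence i: "i < n" and j: "j < n" using Vc by auto
    have "(V * rdiag n l * cadj V) $$ (i,j) = (\<Sum>k<n. V $$ (i,k) * complex_of_real (l k) * cnj (V $$ (j,k)))"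
      by (rule udu_entry[OF Vc i j])
    also have "\<dots> = V $$ (i,0) * complex_of_real (l 0) * cnj (V $$ (j,0)) + (\<Sum>k<m. V $$ (i,Suc k) * complex_of_real (l (Suc k)) * cnj (V $$ (j,Suc k)))"
      unfolding n_def by (rule sum.lessThan_Suc_shift)
    also have "\<dots> = A' $$ (i,j)"
    proof (cases i)
      case 0 thus ?thesis using i j Ai0 A0j ereal sum0 by (cases j, auto simp: V0 Vj0 l_def sum0b)
    next
      case (Suc i')
      show ?thesis
      proof (cases j)
        case 0 thus ?thesis using i j Suc Ai0 by (auto simp: V0 Vj0 sum0')
      next
        case (Suc j')
        have "(\<Sum>k<m. V $$ (i,Suc k) * complex_of_real (l (Suc k)) * cnj (V $$ (j,Suc k))) = (\<Sum>k<m. U1 $$ (i',k) * complex_of_real (l1 k) * cnj (U1 $$ (j',k)))"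
          using i j \<open>i = Suc i'\<close> Suc by (intro sum.cong, auto simp: VSS n_def l_def)
        also have "\<dots> = B $$ (i',j')" unfolding B using udu_entry[OF U1c, of i' j' l1] i j \<open>i = Suc i'\<close> Suc by (simp add: n_def)
        also have "\<dots> = A' $$ (i,j)" using i j \<open>i = Suc i'\<close> Suc by (simp add: B_def n_def)
        finally show ?thesis using i j \<open>i = Suc i'\<close> Suc by (simp add: Vj0)
      qed
    qed
    finally show "A' $$ (i,j) = (V * rdiag n l * cadj V) $$ (i,j)" by simp
  qed (insert Vc A'c, auto)
  define U where "U = W * V"
  have Uc: "U \<in> carrier_mat n n" using Wc Vc by (simp add: U_def)
  have cU: "cadj U = cadj V * cadj W" unfolding U_def by (rule cadj_mult[OF Wc Vc])
  have "U * cadj U = W * (V * cadj V) * cadj W" unfolding cU unfolding U_def using Wc Vc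
    by (simp add: assoc_mult_mat[of _ n n _ n _ n])
  also have "\<dots> = 1\<^sub>m n" unfolding VV using Wc WW by simp
  finally have uU: "unitary n U" using Uc by (simp add: unitary_def)
  have "A = (W * cadj W) * A * (W * cadj W)" unfolding WW using A by simp
  also have "\<dots> = W * A' * cadj W" unfolding A'_def using Wc A by (simp add: assoc_mult_mat[of _ n n _ n _ n])
  also have "\<dots> = U * rdiag n l * cadj U" unfolding A'V cU unfolding U_def using Wc Vc
    by (simp add: assoc_mult_mat[of _ n n _ n _ n])
  finally show ?case using uU unfolding n_def by blast
qed

lemma qform_udu:
  assumes U: "U \<in> carrier_mat n n" and v: "v \<in> carrier_vec n"
  shows "qform (U * rdiag n c * cadj U) v =
    (\<Sum>k<n. complex_of_real (c k) * ((\<Sum>i<n. cnj (v $ i) * U $$ (i,k)) * cnj (\<Sum>j<n. cnj (v $ j) * U $$ (j,k))))"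
proof -
  have dv: "dim_vec v = n" using v by simp
  have "qform (U * rdiag n c * cadj U) v = (\<Sum>i<n. \<Sum>j<n. cnj (v $ i) * (\<Sum>k<n. U $$ (i,k) * complex_of_real (c k) * cnj (U $$ (j,k))) * v $ j)"
    unfolding qform_def dv using udu_entry[OF U] by (intro sum.cong refl, auto)
  also have "\<dots> = (\<Sum>i<n. \<Sum>j<n. \<Sum>k<n. complex_of_real (c k) * ((cnj (v $ i) * U $$ (i,k)) * (v $ j * cnj (U $$ (j,k)))))"
    by (simp add: sum_distrib_left sum_distrib_right ac_simps)
  also have "\<dots> = (\<Sum>k<n. \<Sum>i<n. \<Sum>j<n. complex_of_real (c k) * ((cnj (v $ i) * U $$ (i,k)) * (v $ j * cnj (U $$ (j,k)))))"
    by (subst sum.swap, subst (2) sum.swap, rule refl)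
  also have "\<dots> = (\<Sum>k<n. complex_of_real (c k) * ((\<Sum>i<n. cnj (v $ i) * U $$ (i,k)) * cnj (\<Sum>j<n. cnj (v $ j) * U $$ (j,k))))"
    by (simp add: sum_distrib_left sum_distrib_right ac_simps)
  finally show ?thesis .
qed

lemma re_sq_nonneg: "0 \<le> c \<Longrightarrow> 0 \<le> Re (complex_of_real c * (z * cnj z))"
  by (simp add: complex_mult_cnj)

lemma psd_udu:
  assumes U: "U \<in> carrier_mat n n" and c: "\<And>k. k < n \<Longrightarrow> 0 \<le> c k"
  shows "psd n (U * rdiag n c * cadj U)"
  unfolding psd_def hermitian_def
proof (intro conjI ballI)
  show M: "U * rdiag n c * cadj U \<in> carrier_mat n n" using U by simp
  show "cadj (U * rdiag n c * cadj U) = U * rdiag n c * cadj U"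
  proof (rule eq_matI)
    fix i j assume "i < dim_row (U * rdiag n c * cadj U)" "j < dim_col (U * rdiag n c * cadj U)"
    hence i: "i < n" and j: "j < n" using U by auto
    have "cadj (U * rdiag n c * cadj U) $$ (i,j) = cnj ((U * rdiag n c * cadj U) $$ (j,i))"
      by (rule cadj_index, insert M i j, auto)
    also have "\<dots> = (U * rdiag n c * cadj U) $$ (i,j)"
      unfolding udu_entry[OF U i j] udu_entry[OF U j i] by (simp add: ac_simps)
    finally show "cadj (U * rdiag n c * cadj U) $$ (i,j) = (U * rdiag n c * cadj U) $$ (i,j)" .
  qed (insert M, auto)
  fix v :: "complex vec" assume v: "v \<in> carrier_vec n"
  show "0 \<le> Re (qform (U * rdiag n c * cadj U) v)"
    unfolding qform_udu[OF U v] Re_sum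
    by (rule sum_nonneg, rule re_sq_nonneg, simp add: c)
qed

lemma mtrace_mult:
  assumes P: "P \<in> carrier_mat n n" and M: "M \<in> carrier_mat n n"
  shows "mtrace (P * M) = (\<Sum>i<n. \<Sum>j<n. P $$ (i,j) * M $$ (j,i))"
  unfolding mtrace_def using P M by (simp add: scalar_prod_def lessThan_atLeast0)

lemma trace_psd:
  assumes P: "psd n P" and D: "psd n D"
  shows "0 \<le> Re (mtrace (P * D))"
proof -
  have hP: "hermitian n P" using P by (simp add: psd_def)
  obtain U p where U: "unitary n U" and Pe: "P = U * rdiag n p * cadj U" using spectral[OF hP] by blast
  have Uc: "U \<in> carrier_mat n n" using U by (simp add: unitary_def)
  have Dc: "D \<in> carrier_mat n n" using D by (simp add: psd_def hermitian_def)
  have Pc: "P \<in> carrier_mat n n" using P by (simp add: psd_def hermitian_def)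
  have colU: "col U k \<in> carrier_vec n" if "k < n" for k using Uc that by simp
  have p: "0 \<le> p k" if k: "k < n" for k
  proof -
    have "qform P (col U k) = (\<Sum>m<n. complex_of_real (p m) * ((\<Sum>i<n. cnj (col U k $ i) * U $$ (i,m)) * cnj (\<Sum>j<n. cnj (col U k $ j) * U $$ (j,m))))"
      unfolding Pe by (rule qform_udu[OF Uc colU[OF k]])
    also have "\<dots> = (\<Sum>m<n. complex_of_real (p m) * ((if k = m then 1 else 0) * cnj (if k = m then 1 else 0)))"
      using unitary_cols[OF U k] Uc k by (intro sum.cong refl, auto)
    also have "\<dots> = complex_of_real (p k)" using k by (simp add: if_distrib cong: if_cong)
    finally have "qform P (col U k) = complex_of_real (p k)" .
    with P colU[OF k] show ?thesis unfolding psd_def by force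
  qed
  have "mtrace (P * D) = (\<Sum>i<n. \<Sum>j<n. (\<Sum>k<n. U $$ (i,k) * complex_of_real (p k) * cnj (U $$ (j,k))) * D $$ (j,i))"
    unfolding mtrace_mult[OF Pc Dc]
    using udu_entry[OF Uc] Pe by (intro sum.cong refl, auto)
  also have "\<dots> = (\<Sum>i<n. \<Sum>j<n. \<Sum>k<n. complex_of_real (p k) * (cnj (U $$ (j,k)) * D $$ (j,i) * U $$ (i,k)))"
    by (simp add: sum_distrib_left sum_distrib_right ac_simps)
  also have "\<dots> = (\<Sum>k<n. \<Sum>j<n. \<Sum>i<n. complex_of_real (p k) * (cnj (U $$ (j,k)) * D $$ (j,i) * U $$ (i,k)))"
    by (subst (2) sum.swap, subst sum.swap, subst (2) sum.swap, rule refl)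
  also have "\<dots> = (\<Sum>k<n. complex_of_real (p k) * (\<Sum>j<n. \<Sum>i<n. cnj (U $$ (j,k)) * D $$ (j,i) * U $$ (i,k)))"
    by (simp add: sum_distrib_left)
  also have "\<dots> = (\<Sum>k<n. complex_of_real (p k) * qform D (col U k))"
    unfolding qform_def using Uc by (intro sum.cong refl, auto)
  finally have "Re (mtrace (P * D)) = (\<Sum>k<n. p k * Re (qform D (col U k)))" by (simp add: Re_sum)
  also have "\<dots> \<ge> 0" using D colU p by (intro sum_nonneg mult_nonneg_nonneg, auto simp: psd_def)
  finally show ?thesis .
qed

lemma poly_lin_prod: "poly (prod_list (map (\<lambda>x. [:- x, 1:]) xs)) k = 0 \<longleftrightarrow> k \<in> set xs"
  for k :: complex
  by (induction xs, auto)

lemma eig_iff: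
  assumes U: "unitary n U" and A: "A = U * rdiag n a * cadj U"
  shows "eigenvalue A k \<longleftrightarrow> (\<exists>i<n. k = complex_of_real (a i))"
proof -
  have Uc: "U \<in> carrier_mat n n" using U by (simp add: unitary_def)
  define D where "D = rdiag n a"
  have Dc: "D \<in> carrier_mat n n" by (simp add: D_def)
  have Ac: "A \<in> carrier_mat n n" using A Uc by simp
  have "similar_mat_wit A D U (cadj U)"
    unfolding similar_mat_wit_def Let_def using Ac Dc Uc unitary_left[OF U] unitary_right[OF U] A D_def
    by auto
  hence sim: "similar_mat A D" unfolding similar_mat_def by blast
  have ut: "upper_triangular D" unfolding upper_triangular_def D_def rdiag_def mat_diag_def by auto
  have "eigenvalue A k \<longleftrightarrow> poly (char_poly A) k = 0" by (rule eigenvalue_root_char_poly[OF Ac])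
  also have "\<dots> \<longleftrightarrow> poly (char_poly D) k = 0" unfolding char_poly_similar[OF sim] ..
  also have "\<dots> \<longleftrightarrow> k \<in> set (diag_mat D)"
    unfolding char_poly_upper_triangular[OF Dc ut] by (rule poly_lin_prod)
  also have "\<dots> \<longleftrightarrow> (\<exists>i<n. k = complex_of_real (a i))"
    unfolding diag_mat_def D_def rdiag_def mat_diag_def by auto
  finally show ?thesis .
qed

lemma lam_bounds:
  assumes U: "unitary n U" and A: "A = U * rdiag n a * cadj U" and k: "k < n"
  shows "a k \<le> lambda_max A" "lambda_min A \<le> a k"
proof -
  have S: "{r. eigenvalue A (complex_of_real r)} = a ` {..<n}"
    using eig_iff[OF U A] by (auto simp: image_iff)
  have fin: "finite {r. eigenvalue A (complex_of_real r)}" unfolding S by simp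
  have mem: "a k \<in> {r. eigenvalue A (complex_of_real r)}" unfolding S using k by simp
  show "a k \<le> lambda_max A" unfolding lambda_max_def by (rule Max_ge[OF fin mem])
  show "lambda_min A \<le> a k" unfolding lambda_min_def by (rule Min_le[OF fin mem])
qed

lemma shift_udu:
  assumes U: "unitary n U" and A: "A = U * rdiag n a * cadj U"
  shows "complex_of_real \<alpha> \<cdot>\<^sub>m 1\<^sub>m n + complex_of_real \<beta> \<cdot>\<^sub>m A = U * rdiag n (\<lambda>k. \<alpha> + \<beta> * a k) * cadj U"
proof -
  have Uc: "U \<in> carrier_mat n n" using U by (simp add: unitary_def)
  have Ac: "A \<in> carrier_mat n n" using A Uc by simp
  show ?thesis
  proof (rule eq_matI)
    fix i j assume "i < dim_row (U * rdiag n (\<lambda>k. \<alpha> + \<beta> * a k) * cadj U)" "j < dim_col (U * rdiag n (\<lambda>k. \<alpha> + \<beta> * a k) * cadj U)"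
    hence i: "i < n" and j: "j < n" using Uc by auto
    have "(U * rdiag n (\<lambda>k. \<alpha> + \<beta> * a k) * cadj U) $$ (i,j) =
      (\<Sum>k<n. complex_of_real \<alpha> * (U $$ (i,k) * cnj (U $$ (j,k))) + complex_of_real \<beta> * (U $$ (i,k) * complex_of_real (a k) * cnj (U $$ (j,k))))"
      unfolding udu_entry[OF Uc i j] by (intro sum.cong refl, simp add: algebra_simps)
    also have "\<dots> = complex_of_real \<alpha> * (\<Sum>k<n. U $$ (i,k) * cnj (U $$ (j,k))) + complex_of_real \<beta> * A $$ (i,j)"
      unfolding A udu_entry[OF Uc i j] by (simp add: sum.distrib sum_distrib_left)
    also have "\<dots> = (complex_of_real \<alpha> \<cdot>\<^sub>m 1\<^sub>m n + complex_of_real \<beta> \<cdot>\<^sub>m A) $$ (i,j)"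
      using unitary_rows[OF U i j] i j Ac by simp
    finally show "(complex_of_real \<alpha> \<cdot>\<^sub>m 1\<^sub>m n + complex_of_real \<beta> \<cdot>\<^sub>m A) $$ (i,j) = (U * rdiag n (\<lambda>k. \<alpha> + \<beta> * a k) * cadj U) $$ (i,j)" by simp
  qed (insert Uc Ac, auto)
qed

lemma trace_shift:
  assumes A: "A \<in> carrier_mat n n" and M: "M \<in> carrier_mat n n"
  shows "mtrace ((complex_of_real \<alpha> \<cdot>\<^sub>m 1\<^sub>m n + complex_of_real \<beta> \<cdot>\<^sub>m A) * M)
     = complex_of_real \<alpha> * mtrace M + complex_of_real \<beta> * mtrace (A * M)"
proof -
  have Pc: "complex_of_real \<alpha> \<cdot>\<^sub>m 1\<^sub>m n + complex_of_real \<beta> \<cdot>\<^sub>m A \<in> carrier_mat n n" using A by simp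
  have "mtrace ((complex_of_real \<alpha> \<cdot>\<^sub>m 1\<^sub>m n + complex_of_real \<beta> \<cdot>\<^sub>m A) * M) =
     (\<Sum>i<n. \<Sum>j<n. (complex_of_real \<alpha> * (if i = j then 1 else 0) + complex_of_real \<beta> * A $$ (i,j)) * M $$ (j,i))"
    unfolding mtrace_mult[OF Pc M] using A by (intro sum.cong refl, auto)
  also have "\<dots> = (\<Sum>i<n. complex_of_real \<alpha> * M $$ (i,i) + complex_of_real \<beta> * (\<Sum>j<n. A $$ (i,j) * M $$ (j,i)))"
  proof (intro sum.cong refl)
    fix i assume i: "i \<in> {..<n}"
    have "(\<Sum>j<n. (complex_of_real \<alpha> * (if i = j then 1 else 0) + complex_of_real \<beta> * A $$ (i,j)) * M $$ (j,i))
      = (\<Sum>j<n. (if j = i then complex_of_real \<alpha> * M $$ (j,i) else 0) + complex_of_real \<beta> * (A $$ (i,j) * M $$ (j,i)))"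
      by (intro sum.cong refl, auto simp: algebra_simps)
    also have "\<dots> = complex_of_real \<alpha> * M $$ (i,i) + complex_of_real \<beta> * (\<Sum>j<n. A $$ (i,j) * M $$ (j,i))"
      using i by (simp add: sum.distrib sum_distrib_left)
    finally show "(\<Sum>j<n. (complex_of_real \<alpha> * (if i = j then 1 else 0) + complex_of_real \<beta> * A $$ (i,j)) * M $$ (j,i))
      = complex_of_real \<alpha> * M $$ (i,i) + complex_of_real \<beta> * (\<Sum>j<n. A $$ (i,j) * M $$ (j,i))" .
  qed
  also have "\<dots> = complex_of_real \<alpha> * mtrace M + complex_of_real \<beta> * mtrace (A * M)"
    unfolding mtrace_mult[OF A M] using M by (simp add: mtrace_def sum.distrib sum_distrib_left)
  finally show ?thesis .
qed

lemma conv_lemma: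
  assumes oc: "operator_convex f" and P: "psd n P"
    and h: "\<And>M. M \<in> carrier_mat n n \<Longrightarrow> h M = Re (mtrace (P * M))"
  shows "convex_on_pd n (\<lambda>X. h (mat_fun f X))"
  unfolding convex_on_pd_def
proof (intro allI impI)
  fix X Y :: "complex mat" and t :: real
  assume X: "pd n X" and Y: "pd n Y" and t0: "0 \<le> t" and t1: "t \<le> 1"
  define Z where "Z = complex_of_real t \<cdot>\<^sub>m X + complex_of_real (1 - t) \<cdot>\<^sub>m Y"
  define FX where "FX = mat_fun f X"
  define FY where "FY = mat_fun f Y"
  define FZ where "FZ = mat_fun f Z"
  define G where "G = complex_of_real t \<cdot>\<^sub>m FX + complex_of_real (1 - t) \<cdot>\<^sub>m FY"
  have le: "loewner_le n FZ G"
    using oc[unfolded operator_convex_def, rule_format, OF X Y t0 t1] unfolding FZ_def Z_def G_def FX_def FY_def .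
  have le2: "loewner_le n (mat_fun f (complex_of_real 1 \<cdot>\<^sub>m X + complex_of_real (1 - 1) \<cdot>\<^sub>m X))
      (complex_of_real 1 \<cdot>\<^sub>m FX + complex_of_real (1 - 1) \<cdot>\<^sub>m FX)"
    using oc[unfolded operator_convex_def, rule_format, OF X X, of 1] unfolding FX_def by simp
  have FXc: "FX \<in> carrier_mat n n" using le2 unfolding loewner_le_def carrier_mat_def by simp
  have Gc: "G \<in> carrier_mat n n" using le unfolding loewner_le_def by simp
  hence FYc: "FY \<in> carrier_mat n n" unfolding G_def carrier_mat_def by simp
  have FZc: "FZ \<in> carrier_mat n n" using le unfolding loewner_le_def by simp
  have Pc: "P \<in> carrier_mat n n" using P by (simp add: psd_def hermitian_def)
  have ps: "psd n (G - FZ)" using le unfolding loewner_le_def by simp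
  have GZc: "G - FZ \<in> carrier_mat n n" using FZc by (simp add: minus_carrier_mat)
  have "mtrace (P * (G - FZ)) = (\<Sum>i<n. \<Sum>j<n. P $$ (i,j) * (complex_of_real t * FX $$ (j,i) + complex_of_real (1 - t) * FY $$ (j,i) - FZ $$ (j,i)))"
    unfolding mtrace_mult[OF Pc GZc] using FXc FYc FZc by (intro sum.cong refl, auto simp: G_def)
  also have "\<dots> = complex_of_real t * mtrace (P * FX) + complex_of_real (1 - t) * mtrace (P * FY) - mtrace (P * FZ)"
    unfolding mtrace_mult[OF Pc FXc] mtrace_mult[OF Pc FYc] mtrace_mult[OF Pc FZc]
    by (simp add: algebra_simps sum.distrib sum_subtractf sum_distrib_left)
  finally have "Re (mtrace (P * (G - FZ))) = t * Re (mtrace (P * FX)) + (1 - t) * Re (mtrace (P * FY)) - Re (mtrace (P * FZ))"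
    by simp
  moreover have "0 \<le> Re (mtrace (P * (G - FZ)))" by (rule trace_psd[OF P ps])
  ultimately show "h (mat_fun f Z) \<le> t * h (mat_fun f X) + (1 - t) * h (mat_fun f Y)"
    unfolding FX_def[symmetric] FY_def[symmetric] FZ_def[symmetric]
    by (simp add: h[OF FXc] h[OF FYc] h[OF FZc])
qed

theorem mainTheorem9:
  fixes f :: "real \<Rightarrow> real" and n :: nat and A :: "complex mat"
  assumes "operator_convex f"
    and "psd n A"
  shows "rel_smooth n (lambda_max A) (\<lambda>X. Re (mtrace (A * mat_fun f X))) (\<lambda>X. Re (mtrace (mat_fun f X)))
       \<and> rel_strongly_convex n (lambda_min A) (\<lambda>X. Re (mtrace (A * mat_fun f X))) (\<lambda>X. Re (mtrace (mat_fun f X)))"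
proof -
  have hA: "hermitian n A" using assms(2) by (simp add: psd_def)
  have Ac: "A \<in> carrier_mat n n" using hA by (simp add: hermitian_def)
  obtain U a where U: "unitary n U" and Ae: "A = U * rdiag n a * cadj U" using spectral[OF hA] by blast
  have Uc: "U \<in> carrier_mat n n" using U by (simp add: unitary_def)
  define L where "L = lambda_max A"
  define \<mu> where "\<mu> = lambda_min A"
  define P1 where "P1 = complex_of_real L \<cdot>\<^sub>m 1\<^sub>m n + complex_of_real (-1) \<cdot>\<^sub>m A"
  define P2 where "P2 = complex_of_real (- \<mu>) \<cdot>\<^sub>m 1\<^sub>m n + complex_of_real 1 \<cdot>\<^sub>m A"
  have p1: "psd n P1" unfolding P1_def shift_udu[OF U Ae]
    by (rule psd_udu[OF Uc], insert lam_bounds(1)[OF U Ae], auto simp: L_def)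
  have c1: "convex_on_pd n (\<lambda>X. L * Re (mtrace (mat_fun f X)) - Re (mtrace (A * mat_fun f X)))"
    by (rule conv_lemma[OF assms(1) p1, where h = "\<lambda>M. L * Re (mtrace M) - Re (mtrace (A * M))"], unfold P1_def, subst trace_shift[OF Ac], assumption, simp)
  have p2: "psd n P2" unfolding P2_def shift_udu[OF U Ae]
    by (rule psd_udu[OF Uc], insert lam_bounds(2)[OF U Ae], auto simp: \<mu>_def)
  have c2: "convex_on_pd n (\<lambda>X. Re (mtrace (A * mat_fun f X)) - \<mu> * Re (mtrace (mat_fun f X)))"
    by (rule conv_lemma[OF assms(1) p2, where h = "\<lambda>M. Re (mtrace (A * M)) - \<mu> * Re (mtrace M)"], unfold P2_def, subst trace_shift[OF Ac], assumption, simp)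
  show ?thesis unfolding rel_smooth_def rel_strongly_convex_def
    using c1 c2 by (simp add: L_def \<mu>_def)
qed

end
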